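(* Let $A,B$ be $n\times n$ complex matrices. Then \[ \|A+B\|_F\le \sqrt{\frac{1+\sqrt{2}}{2}}\,\big\||A|+|B|\big\|_F . \]
   Context: For an $n\times n$ complex matrix $A$, $|A|:=(A^*A)^{1/2}$ denotes the operator absolute value (positive semidefinite square root), where $A^*$ is the conjugate transpose. $\|A\|_F=(\operatorname{tr}|A|^2)^{1/2}=(\operatorname{tr}A^*A)^{1/2}$ is the Frobenius norm. *)

theory Defs
  imports "HOL-Analysis.Analysis"
begin

definition cadj :: "complex^'n^'n \<Rightarrow> complex^'n^'n" where
  "cadj A = (\<chi> i j. cnj (A $ j $ i))"

definition hermitian_mat :: "complex^'n^'n \<Rightarrow> bool" where
  "hermitian_mat P \<longleftrightarrow> cadj P = P"

definition psd_mat :: "complex^'n^'n \<Rightarrow> bool" where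
  "psd_mat P \<longleftrightarrow> hermitian_mat P \<and>
     (\<forall>x :: complex^'n. 0 \<le> Re (\<Sum>i\<in>UNIV. \<Sum>j\<in>UNIV. cnj (x $ i) * P $ i $ j * x $ j))"

definition mabs :: "complex^'n^'n \<Rightarrow> complex^'n^'n" where
  "mabs A = (THE P. psd_mat P \<and> P ** P = cadj A ** A)"

definition frob_norm :: "complex^'n^'n \<Rightarrow> real" where
  "frob_norm A = sqrt (Re (trace (cadj A ** A)))"

end

theory Submission
  imports Defs
begin


lemma cadj_nth[simp]: "cadj A $ i $ j = cnj (A $ j $ i)"
  by (simp add: cadj_def)

lemma cadj_cadj[simp]: "cadj (cadj A) = A"
  by (simp add: cadj_def vec_eq_iff)

lemma cadj_add[simp]: "cadj (A + B) = cadj A + cadj B"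
  by (simp add: vec_eq_iff)

lemma cadj_diff[simp]: "cadj (A - B) = cadj A - cadj B"
  by (simp add: vec_eq_iff)

lemma cadj_mult: "cadj (A ** B) = cadj B ** cadj A"
  by (simp add: vec_eq_iff matrix_matrix_mult_def mult.commute)

lemma cadj_mat1[simp]: "cadj (mat 1) = mat 1"
  by (simp add: vec_eq_iff mat_def)

lemma cadj_0[simp]: "cadj 0 = 0"
  by (simp add: vec_eq_iff)

lemma trace_cadj: "trace (cadj A) = cnj (trace A)"
  by (simp add: trace_def)

lemma frob_expand: "trace (cadj X ** X) = of_real (\<Sum>i\<in>UNIV. \<Sum>k\<in>UNIV. (cmod (X $ k $ i))\<^sup>2)"
  by (simp add: trace_def matrix_matrix_mult_def of_real_sum complex_norm_square mult.commute del: of_real_power)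



definition cinner :: "complex^'n \<Rightarrow> complex^'n \<Rightarrow> complex" where
  "cinner x y = (\<Sum>i\<in>UNIV. cnj (x $ i) * y $ i)"

lemma cinner_add_right: "cinner x (y + z) = cinner x y + cinner x z"
  by (simp add: cinner_def distrib_left sum.distrib)
lemma cinner_add_left: "cinner (x + y) z = cinner x z + cinner y z"
  by (simp add: cinner_def distrib_right sum.distrib)
lemma cinner_diff_right: "cinner x (y - z) = cinner x y - cinner x z"
  by (simp add: cinner_def right_diff_distrib sum_subtractf)
lemma cinner_diff_left: "cinner (x - y) z = cinner x z - cinner y z"
  by (simp add: cinner_def left_diff_distrib sum_subtractf)
lemma cinner_smult_right: "cinner x (c *s y) = c * cinner x y"
  by (simp add: cinner_def sum_distrib_left mult.left_commute)
lemma cinner_smult_left: "cinner (c *s x) y = cnj c * cinner x y"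
  by (simp add: cinner_def sum_distrib_left mult.assoc)
lemma cinner_scaleR_right: "cinner x (r *\<^sub>R y) = of_real r * cinner x y"
  by (simp add: cinner_def sum_distrib_left mult.left_commute scaleR_conv_of_real[where 'a=complex])
lemma cinner_scaleR_left: "cinner (r *\<^sub>R x) y = of_real r * cinner x y"
  by (simp add: cinner_def sum_distrib_left mult.assoc scaleR_conv_of_real[where 'a=complex])
lemma cinner_zero_left[simp]: "cinner 0 y = 0"
  by (simp add: cinner_def)
lemma cinner_zero_right[simp]: "cinner x 0 = 0"
  by (simp add: cinner_def)
lemma cinner_commute: "cinner y x = cnj (cinner x y)"
  by (simp add: cinner_def mult.commute)
lemma Re_cinner: "Re (cinner x y) = x \<bullet> y"
  by (simp add: cinner_def inner_vec_def inner_complex_def)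
lemma cinner_self: "cinner x x = of_real ((norm x)\<^sup>2)"
proof -
  have "cinner x x = of_real (Re (cinner x x))"
    by (simp add: cinner_def complex_eq_iff)
  also have "Re (cinner x x) = (norm x)\<^sup>2"
    by (simp add: Re_cinner power2_norm_eq_inner)
  finally show ?thesis .
qed
lemma cinner_self_eq_0: "cinner x x = 0 \<longleftrightarrow> x = 0"
  by (simp add: cinner_self)
lemma cinner_matrix: "cinner x (H *v y) = cinner (cadj H *v x) y"
proof -
  have "cinner x (H *v y) = (\<Sum>i\<in>UNIV. \<Sum>j\<in>UNIV. cnj (x $ i) * H $ i $ j * y $ j)"
    by (simp add: cinner_def matrix_vector_mult_def sum_distrib_left mult.assoc)
  also have "\<dots> = (\<Sum>j\<in>UNIV. \<Sum>i\<in>UNIV. cnj (x $ i) * H $ i $ j * y $ j)"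
    by (rule sum.swap)
  also have "\<dots> = cinner (cadj H *v x) y"
    by (simp add: cinner_def matrix_vector_mult_def sum_distrib_left sum_distrib_right mult.commute mult.left_commute)
  finally show ?thesis .
qed

lemma cinner_herm: "hermitian_mat H \<Longrightarrow> cinner x (H *v y) = cinner (H *v x) y"
  by (simp add: cinner_matrix hermitian_mat_def)

definition qf :: "complex^'n^'n \<Rightarrow> complex^'n \<Rightarrow> complex" where
  "qf P x = (\<Sum>i\<in>UNIV. \<Sum>j\<in>UNIV. cnj (x $ i) * P $ i $ j * x $ j)"

lemma qf_cinner: "qf P x = cinner x (P *v x)"
  by (simp add: qf_def cinner_def matrix_vector_mult_def sum_distrib_left mult.assoc)

lemma psd_iff: "psd_mat P \<longleftrightarrow> hermitian_mat P \<and> (\<forall>x. 0 \<le> Re (cinner x (P *v x)))"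
  unfolding psd_mat_def qf_cinner[symmetric] qf_def by simp

lemma herm_form_real: "hermitian_mat H \<Longrightarrow> Im (cinner x (H *v x)) = 0"
proof -
  assume h: "hermitian_mat H"
  have "cinner x (H *v x) = cnj (cinner x (H *v x))"
    by (metis cinner_commute cinner_herm h)
  then show ?thesis by (metis cnj.simps(2) complex.sel(2) equation_minus_iff neg_equal_zero)
qed

lemma smult_scaleR: "(r *\<^sub>R (x::complex^'n)) = of_real r *s x"
  by (simp add: vec_eq_iff scaleR_conv_of_real[where 'a=complex])

lemma mv_scaleR: "H *v (r *\<^sub>R x) = r *\<^sub>R (H *v (x::complex^'n))"
  by (simp add: vec_eq_iff matrix_vector_mult_def scaleR_conv_of_real[where 'a=complex] sum_distrib_left mult.left_commute)

lemma mv_smult: "H *v (c *s x) = c *s (H *v (x::complex^'n))"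
  by (simp add: vec_eq_iff matrix_vector_mult_def sum_distrib_left mult.left_commute)

lemma cont_cinner: "continuous_on S (\<lambda>x. cinner e x)"
  unfolding cinner_def by (intro continuous_intros)

lemma cont_qf: "continuous_on S (\<lambda>x. Re (qf H x))"
  unfolding qf_def by (intro continuous_intros)



lemma quad_nonpos_zero:
  fixes a b :: real
  assumes "\<forall>t. t * a + t\<^sup>2 * b \<le> 0"
  shows "a = 0"
proof (rule ccontr)
  assume "a \<noteq> 0"
  define s where "s = 1 / (\<bar>b\<bar> + 1)"
  have s1: "s > 0" unfolding s_def by (simp add: add_pos_nonneg)
  have s2: "s * \<bar>b\<bar> < 1" unfolding s_def by (simp add: divide_less_eq)
  have "(s * a) * a + (s * a)\<^sup>2 * b \<le> 0" using assms by blast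
  moreover have "(s * a) * a + (s * a)\<^sup>2 * b = a\<^sup>2 * (s * (1 + s * b))"
    by (simp add: power2_eq_square algebra_simps)
  ultimately have le: "a\<^sup>2 * (s * (1 + s * b)) \<le> 0" by simp
  have "s * (- \<bar>b\<bar>) \<le> s * b" by (rule mult_left_mono) (use s1 in auto)
  hence "1 + s * b > 0" using s2 by simp
  hence "s * (1 + s * b) > 0" using s1 by simp
  moreover have "a\<^sup>2 > 0" using \<open>a \<noteq> 0\<close> by simp
  ultimately have "a\<^sup>2 * (s * (1 + s * b)) > 0" by simp
  with le show False by simp
qed

lemma eigvec_orth_exists:
  fixes H :: "complex^'n^'n" and E :: "(complex^'n) set"
  assumes herm: "hermitian_mat H" and finE: "finite E" and cardE: "card E < CARD('n)"
    and eig: "\<forall>e\<in>E. \<exists>\<mu>. H *v e = \<mu> *s e"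
  shows "\<exists>x. cinner x x = 1 \<and> (\<forall>e\<in>E. cinner e x = 0) \<and> (\<exists>\<mu>. H *v x = \<mu> *s x)"
proof -
  define S where "S = {x. \<forall>e\<in>E. cinner e x = 0}"
  have S_add: "x + y \<in> S" if "x \<in> S" "y \<in> S" for x y
    using that by (simp add: S_def cinner_add_right)
  have S_diff: "x - y \<in> S" if "x \<in> S" "y \<in> S" for x y
    using that by (simp add: S_def cinner_diff_right)
  have S_smult: "c *s x \<in> S" if "x \<in> S" for x c
    using that by (simp add: S_def cinner_smult_right)
  have S_scaleR: "r *\<^sub>R x \<in> S" if "x \<in> S" for x r
    using that by (simp add: S_def cinner_scaleR_right)
  have S_H: "H *v x \<in> S" if "x \<in> S" for x
  proof -
    { fix e assume "e \<in> E"
      then obtain \<mu> where "H *v e = \<mu> *s e" using eig by blast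
      hence "cinner e (H *v x) = cnj \<mu> * cinner e x"
        using cinner_herm[OF herm] by (simp add: cinner_smult_left)
      hence "cinner e (H *v x) = 0" using that \<open>e \<in> E\<close> by (simp add: S_def) }
    thus ?thesis by (simp add: S_def)
  qed
  obtain z where z0: "z \<noteq> 0" and zS: "z \<in> S"
  proof -
    define F where "F = E \<union> (\<lambda>e. \<i> *s e) ` E"
    have finF: "finite F" using finE by (simp add: F_def)
    have "card F \<le> card E + card ((\<lambda>e. \<i> *s e) ` E)"
      unfolding F_def by (rule card_Un_le)
    also have "\<dots> \<le> 2 * card E" using card_image_le[OF finE, of "\<lambda>e. \<i> *s e"] by simp
    finally have "card F < DIM(complex^'n)" using cardE by simp
    moreover have "dim F \<le> card F" using dim_le_card[of F F] finF span_superset by blast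
    ultimately have "dim F < DIM(complex^'n)" by simp
    then obtain z where z: "z \<noteq> 0" "\<And>y. y \<in> span F \<Longrightarrow> orthogonal z y"
      using orthogonal_to_subspace_exists by blast
    have "z \<in> S"
    proof -
      { fix e assume e: "e \<in> E"
        have "e \<in> span F" "\<i> *s e \<in> span F" using e by (auto simp: F_def intro: span_base)
        hence o1: "z \<bullet> e = 0" and o2: "z \<bullet> (\<i> *s e) = 0" using z(2) by (auto simp: orthogonal_def)
        have "Re (cinner e z) = 0" using o1 by (simp add: Re_cinner inner_commute)
        moreover have "Re (cinner (\<i> *s e) z) = 0" using o2 by (simp add: Re_cinner inner_commute)
        hence "Im (cinner e z) = 0" by (simp add: cinner_smult_left)
        ultimately have "cinner e z = 0" by (simp add: complex_eq_iff) }
      thus ?thesis by (simp add: S_def)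
    qed
    thus ?thesis using z that by blast
  qed
  define K where "K = S \<inter> sphere 0 1"
  have "closed S"
  proof -
    have "S = (\<Inter>e\<in>E. {x. cinner e x = 0})" by (auto simp: S_def)
    moreover have "closed {x. cinner e x = 0}" for e
      by (rule closed_Collect_eq) (auto intro: cont_cinner)
    ultimately show ?thesis by auto
  qed
  hence cK: "compact K" unfolding K_def by (simp add: closed_Int_compact)
  have z': "(1 / norm z) *\<^sub>R z \<in> K" using z0 zS S_scaleR by (simp add: K_def)
  hence "K \<noteq> {}" by blast
  then obtain x where xK: "x \<in> K" and xmax: "\<forall>y\<in>K. Re (qf H y) \<le> Re (qf H x)"
    using continuous_attains_sup[OF cK _ cont_qf] by blast
  define lam where "lam = Re (qf H x)"
  have xS: "x \<in> S" and nx: "norm x = 1" using xK by (auto simp: K_def)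
  have xx: "cinner x x = 1" using nx by (simp add: cinner_self)
  have bound: "Re (cinner v (H *v v)) \<le> lam * (norm v)\<^sup>2" if "v \<in> S" for v
  proof (cases "v = 0")
    case True then show ?thesis by (simp add: matrix_vector_mult_def cinner_def)
  next
    case False
    define r where "r = 1 / norm v"
    have "r *\<^sub>R v \<in> K" using that False S_scaleR by (simp add: K_def r_def)
    hence "Re (qf H (r *\<^sub>R v)) \<le> lam" using xmax lam_def by blast
    moreover have "qf H (r *\<^sub>R v) = of_real (r\<^sup>2) * cinner v (H *v v)"
      by (simp add: qf_cinner mv_scaleR cinner_scaleR_left cinner_scaleR_right power2_eq_square)
    ultimately have "r\<^sup>2 * Re (cinner v (H *v v)) \<le> lam" by simp
    hence "(norm v)\<^sup>2 * (r\<^sup>2 * Re (cinner v (H *v v))) \<le> (norm v)\<^sup>2 * lam"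
      by (simp add: mult_left_mono)
    moreover have "(norm v)\<^sup>2 * r\<^sup>2 = 1" using False by (simp add: r_def power2_eq_square)
    moreover have "(norm v)\<^sup>2 * (r\<^sup>2 * Re (cinner v (H *v v))) = ((norm v)\<^sup>2 * r\<^sup>2) * Re (cinner v (H *v v))"
      by (rule mult.assoc[symmetric])
    ultimately show ?thesis by (simp add: mult.commute)
  qed
  have orthH: "cinner y (H *v x) = 0" if yS: "y \<in> S" and yx: "cinner x y = 0" for y
  proof -
    have reH: "Re (cinner y (H *v x)) = 0" if yS: "y \<in> S" and yx: "cinner x y = 0" for y
    proof -
      let ?a = "Re (cinner y (H *v x))"
      let ?b = "Re (cinner y (H *v y)) - lam * (norm y)\<^sup>2"
      have "\<forall>t. t * (2 * ?a) + t\<^sup>2 * ?b \<le> 0"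
      proof
        fix t :: real
        define v where "v = x + t *\<^sub>R y"
        have vS: "v \<in> S" using xS yS S_add S_scaleR by (simp add: v_def)
        have yx': "cinner y x = 0" using yx by (metis cinner_commute complex_cnj_zero)
        have nv: "cinner v v = 1 + of_real (t\<^sup>2) * cinner y y"
          by (simp add: v_def cinner_add_left cinner_add_right cinner_scaleR_left cinner_scaleR_right
              xx yx yx' power2_eq_square)
        have "complex_of_real ((norm v)\<^sup>2) = complex_of_real (1 + t\<^sup>2 * (norm y)\<^sup>2)"
          using nv by (simp add: cinner_self)
        hence nv': "(norm v)\<^sup>2 = 1 + t\<^sup>2 * (norm y)\<^sup>2" using of_real_eq_iff by blast
        have c1: "cinner x (H *v y) = cnj (cinner y (H *v x))"
          by (metis cinner_commute cinner_herm herm)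
        have Hv: "H *v v = H *v x + t *\<^sub>R (H *v y)"
          by (simp add: v_def matrix_vector_right_distrib mv_scaleR)
        have "cinner v (H *v v) = cinner x (H *v x) + of_real t * cinner y (H *v x)
            + of_real t * cinner x (H *v y) + of_real t * of_real t * cinner y (H *v y)"
          unfolding Hv unfolding v_def
          by (simp only: cinner_add_left cinner_add_right cinner_scaleR_left cinner_scaleR_right
              distrib_left distrib_right mult.assoc add.assoc)
        hence "Re (cinner v (H *v v)) = lam + t * (2 * ?a) + t\<^sup>2 * Re (cinner y (H *v y))"
          by (simp add: c1 lam_def qf_cinner power2_eq_square)
        moreover have "lam * (norm v)\<^sup>2 = lam + t\<^sup>2 * (lam * (norm y)\<^sup>2)"
          unfolding nv' by (simp add: algebra_simps)
        moreover have "t\<^sup>2 * ?b = t\<^sup>2 * Re (cinner y (H *v y)) - t\<^sup>2 * (lam * (norm y)\<^sup>2)"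
          by (simp add: right_diff_distrib)
        ultimately show "t * (2 * ?a) + t\<^sup>2 * ?b \<le> 0"
          using bound[OF vS] by linarith
      qed
      hence "2 * ?a = 0" by (rule quad_nonpos_zero)
      thus ?thesis by simp
    qed
    have "Re (cinner y (H *v x)) = 0" using reH yS yx by blast
    moreover have "Re (cinner (\<i> *s y) (H *v x)) = 0"
      using reH S_smult[OF yS] yx by (simp add: cinner_smult_right)
    hence "Im (cinner y (H *v x)) = 0" by (simp add: cinner_smult_left)
    ultimately show ?thesis by (simp add: complex_eq_iff)
  qed
  define mu where "mu = cinner x (H *v x)"
  define w where "w = H *v x - mu *s x"
  have wS: "w \<in> S" using S_H[OF xS] S_smult[OF xS] S_diff by (simp add: w_def)
  have xw: "cinner x w = 0" by (simp add: w_def cinner_diff_right cinner_smult_right xx mu_def)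
  have "cinner w (H *v x) = 0" using orthH[OF wS xw] .
  moreover have "cinner w x = 0" using xw by (metis cinner_commute complex_cnj_zero)
  moreover have "cinner w w = cinner w (H *v x) - mu * cinner w x"
    by (simp add: w_def[of] cinner_diff_right cinner_smult_right)
  ultimately have "cinner w w = 0" by simp
  hence "w = 0" by (simp add: cinner_self_eq_0)
  hence "H *v x = mu *s x" by (simp add: w_def)
  thus ?thesis using xx xS by (auto simp: S_def)
qed



lemma orth_eig_sets:
  fixes H :: "complex^'n^'n"
  assumes herm: "hermitian_mat H"
  shows "k \<le> CARD('n) \<Longrightarrow> \<exists>E. finite E \<and> card E = k \<and> (\<forall>e\<in>E. cinner e e = 1) \<and>
     (\<forall>e\<in>E. \<forall>f\<in>E. e \<noteq> f \<longrightarrow> cinner e f = 0) \<and> (\<forall>e\<in>E. \<exists>\<mu>. H *v e = \<mu> *s e)"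
proof (induction k)
  case 0
  show ?case by (rule exI[of _ "{}"]) simp
next
  case (Suc k)
  then obtain E where E: "finite E" "card E = k" "\<forall>e\<in>E. cinner e e = 1"
     "\<forall>e\<in>E. \<forall>f\<in>E. e \<noteq> f \<longrightarrow> cinner e f = 0" "\<forall>e\<in>E. \<exists>\<mu>. H *v e = \<mu> *s e"
    by auto
  obtain x where x: "cinner x x = 1" "\<forall>e\<in>E. cinner e x = 0" "\<exists>\<mu>. H *v x = \<mu> *s x"
    using eigvec_orth_exists[OF herm E(1) _ E(5)] E(2) Suc.prems by auto
  have xE: "x \<notin> E" using x by auto
  have x2: "\<forall>e\<in>E. cinner x e = 0" using x(2) by (metis cinner_commute complex_cnj_zero)
  show ?case
    apply (rule exI[of _ "insert x E"])
    using E x x2 xE by auto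
qed

definition diagr :: "('n \<Rightarrow> real) \<Rightarrow> complex^'n^'n" where
  "diagr d = (\<chi> i j. if i = j then complex_of_real (d i) else 0)"

lemma cadj_diagr[simp]: "cadj (diagr d) = diagr d"
  by (simp add: diagr_def vec_eq_iff)

lemma diagr_mult: fixes f g :: "'n::finite \<Rightarrow> real" shows "diagr f ** diagr g = diagr (\<lambda>i. f i * g i)"
proof -
  have "(\<Sum>k\<in>UNIV. (if i = k then complex_of_real (f i) else 0) * (if k = j then complex_of_real (g k) else 0))
     = (if i = j then complex_of_real (f i * g i) else 0)" for i j :: 'n
  proof -
    have "(\<Sum>k\<in>UNIV. (if i = k then complex_of_real (f i) else 0) * (if k = j then complex_of_real (g k) else 0))
      = (\<Sum>k\<in>UNIV. if k = i then complex_of_real (f i) * (if k = j then complex_of_real (g k) else 0) else 0)"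
      by (rule sum.cong) auto
    also have "\<dots> = complex_of_real (f i) * (if i = j then complex_of_real (g i) else 0)"
      by (rule trans[OF sum.delta[OF finite]]) simp
    finally show ?thesis by simp
  qed
  then show ?thesis by (simp add: diagr_def vec_eq_iff matrix_matrix_mult_def)
qed

lemma diagr_mv: "(diagr f *v y) $ i = of_real (f i) * y $ i"
proof -
  have "(diagr f *v y) $ i = (\<Sum>j\<in>UNIV. if j = i then of_real (f i) * y $ j else 0)"
    unfolding diagr_def matrix_vector_mult_def vec_lambda_beta by (intro sum.cong) auto
  also have "\<dots> = of_real (f i) * y $ i"
    by (rule trans[OF sum.delta[OF finite]]) simp
  finally show ?thesis .
qed

lemma cinner_diagr: "cinner y (diagr f *v y) = of_real (\<Sum>i\<in>UNIV. f i * (cmod (y $ i))\<^sup>2)"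
proof -
  have "cinner y (diagr f *v y) = (\<Sum>i\<in>UNIV. of_real (f i) * (y $ i * cnj (y $ i)))"
    unfolding cinner_def diagr_mv by (simp add: mult_ac)
  also have "\<dots> = (\<Sum>i\<in>UNIV. of_real (f i * (cmod (y $ i))\<^sup>2))"
    by (simp only: complex_norm_square[symmetric] of_real_mult)
  finally show ?thesis by (simp add: of_real_sum)
qed

lemma mult_diagr: "(A ** diagr d) $ r $ i = A $ r $ i * of_real (d i)"
proof -
  have "(A ** diagr d) $ r $ i = (\<Sum>k\<in>UNIV. if k = i then A $ r $ k * of_real (d i) else 0)"
    unfolding diagr_def matrix_matrix_mult_def vec_lambda_beta by (intro sum.cong) auto
  also have "\<dots> = A $ r $ i * of_real (d i)"
    by (rule trans[OF sum.delta[OF finite]]) simp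
  finally show ?thesis .
qed

lemma unitary_right: "cadj U ** U = mat 1 \<Longrightarrow> U ** cadj U = (mat 1 :: complex^'n^'n)"
  using matrix_left_right_inverse by blast

lemma psd_spectral:
  fixes M :: "complex^'n^'n"
  assumes psd: "psd_mat M"
  shows "\<exists>U d. cadj U ** U = mat 1 \<and> U ** cadj U = mat 1 \<and> (\<forall>i. 0 \<le> d i) \<and>
     M = U ** diagr d ** cadj U"
proof -
  have herm: "hermitian_mat M" and pos: "\<And>x. 0 \<le> Re (cinner x (M *v x))"
    using psd by (auto simp: psd_iff)
  obtain E where E: "finite E" "card E = CARD('n)" "\<forall>e\<in>E. cinner e e = 1"
     "\<forall>e\<in>E. \<forall>f\<in>E. e \<noteq> f \<longrightarrow> cinner e f = 0" "\<forall>e\<in>E. \<exists>\<mu>. M *v e = \<mu> *s e"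
    using orth_eig_sets[OF herm, of "CARD('n)"] by auto
  obtain g where g: "bij_betw g (UNIV :: 'n set) E"
    using finite_same_card_bij[of "UNIV :: 'n set" E] E(1,2) by auto
  have gE: "g i \<in> E" for i using g by (auto simp: bij_betw_def)
  have ginj: "g i = g j \<Longrightarrow> i = j" for i j using g by (auto simp: bij_betw_def inj_def)
  define U :: "complex^'n^'n" where "U = (\<chi> r i. g i $ r)"
  define d where "d i = Re (cinner (g i) (M *v g i))" for i
  have UU: "cadj U ** U = mat 1"
  proof -
    have "(cadj U ** U) $ i $ j = cinner (g i) (g j)" for i j
      by (simp add: U_def matrix_matrix_mult_def cinner_def)
    moreover have "cinner (g i) (g j) = (if i = j then 1 else 0)" for i j
    proof (cases "i = j")
      case True then show ?thesis using E(3) gE by simp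
    next
      case False
      then have "g i \<noteq> g j" using ginj by blast
      then show ?thesis using E(4) gE False by simp
    qed
    ultimately show ?thesis by (simp add: vec_eq_iff mat_def)
  qed
  have eig: "M *v g i = of_real (d i) *s g i" for i
  proof -
    obtain \<mu> where mu: "M *v g i = \<mu> *s g i" using E(5) gE by blast
    have "cinner (g i) (M *v g i) = \<mu>" using mu E(3) gE by (simp add: cinner_smult_right)
    moreover have "Im (cinner (g i) (M *v g i)) = 0" by (rule herm_form_real[OF herm])
    ultimately have "\<mu> = of_real (d i)" by (simp add: d_def complex_eq_iff)
    with mu show ?thesis by simp
  qed
  have dpos: "0 \<le> d i" for i using pos by (simp add: d_def)
  have MU: "M ** U = U ** diagr d"
  proof -
    have "(M ** U) $ r $ i = (M *v g i) $ r" for r i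
      by (simp add: U_def matrix_matrix_mult_def matrix_vector_mult_def)
    moreover have "(U ** diagr d) $ r $ i = of_real (d i) * g i $ r" for r i
      by (simp add: mult_diagr U_def mult.commute)
    ultimately show ?thesis using eig by (simp add: vec_eq_iff)
  qed
  have "M = M ** (U ** cadj U)" using unitary_right[OF UU] by simp
  also have "\<dots> = U ** diagr d ** cadj U" by (simp add: matrix_mul_assoc MU)
  finally show ?thesis using UU unitary_right[OF UU] dpos by blast
qed

lemma psd_conj:
  assumes "cadj U ** U = mat 1" "\<forall>i. 0 \<le> d i"
  shows "psd_mat (U ** diagr d ** cadj U)"
  unfolding psd_iff
proof
  show "hermitian_mat (U ** diagr d ** cadj U)"
    by (simp add: hermitian_mat_def cadj_mult matrix_mul_assoc)
  show "\<forall>x. 0 \<le> Re (cinner x ((U ** diagr d ** cadj U) *v x))"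
  proof
    fix x
    have "cinner x ((U ** diagr d ** cadj U) *v x) = cinner (cadj U *v x) (diagr d *v (cadj U *v x))"
      by (simp add: cinner_matrix matrix_vector_mul_assoc[symmetric])
    also have "\<dots> = of_real (\<Sum>i\<in>UNIV. d i * (cmod ((cadj U *v x) $ i))\<^sup>2)"
      by (rule cinner_diagr)
    finally show "0 \<le> Re (cinner x ((U ** diagr d ** cadj U) *v x))"
      using assms(2) by (simp add: sum_nonneg)
  qed
qed

lemma psd_sqrt_exists:
  assumes "psd_mat (M :: complex^'n^'n)"
  shows "\<exists>P. psd_mat P \<and> P ** P = M"
proof -
  obtain U d where Ud: "cadj U ** U = mat 1" "U ** cadj U = mat 1" "\<forall>i. 0 \<le> d i"
    "M = U ** diagr d ** cadj U"
    using psd_spectral[OF assms] by blast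
  define P where "P = U ** diagr (\<lambda>i. sqrt (d i)) ** cadj U"
  have "psd_mat P" unfolding P_def by (rule psd_conj) (use Ud in auto)
  moreover have "P ** P = M"
  proof -
    have "P ** P = U ** (diagr (\<lambda>i. sqrt (d i)) ** (cadj U ** U) ** diagr (\<lambda>i. sqrt (d i))) ** cadj U"
      by (simp add: P_def matrix_mul_assoc)
    also have "\<dots> = U ** diagr d ** cadj U"
      using Ud by (simp add: diagr_mult)
    finally show ?thesis using Ud by simp
  qed
  ultimately show ?thesis by blast
qed



lemma mm_diff_left: "(A::complex^'n^'n) ** (B - C) = A ** B - A ** C"
  by (simp add: matrix_matrix_mult_def vec_eq_iff right_diff_distrib sum_subtractf)
lemma mm_diff_right: "((A::complex^'n^'n) - B) ** C = A ** C - B ** C"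
  by (simp add: matrix_matrix_mult_def vec_eq_iff left_diff_distrib sum_subtractf)
lemma mm_add_right: "((A::complex^'n^'n) + B) ** C = A ** C + B ** C"
  by (simp add: matrix_matrix_mult_def vec_eq_iff distrib_right sum.distrib)
lemma mm_neg_right: "(A::complex^'n^'n) ** (- B) = - (A ** B)"
  by (simp add: matrix_matrix_mult_def vec_eq_iff sum_negf)
lemma trace_neg: "trace (- (A::complex^'n^'n)) = - trace A"
  by (simp add: trace_def sum_negf)

lemma frob_nonneg: "0 \<le> Re (trace (cadj X ** X))"
  by (simp add: frob_expand sum_nonneg)

lemma frob_zero: "Re (trace (cadj X ** (X::complex^'n^'n))) = 0 \<Longrightarrow> X = 0"
proof -
  assume "Re (trace (cadj X ** X)) = 0"
  hence "(\<Sum>i\<in>UNIV. \<Sum>k\<in>UNIV. (cmod (X $ k $ i))\<^sup>2) = 0" by (simp add: frob_expand)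
  hence "\<forall>i\<in>UNIV. (\<Sum>k\<in>UNIV. (cmod (X $ k $ i))\<^sup>2) = 0"
    by (subst (asm) sum_nonneg_eq_0_iff) (auto intro: sum_nonneg)
  hence "\<forall>i k. (cmod (X $ k $ i))\<^sup>2 = 0"
    by (simp add: sum_nonneg_eq_0_iff)
  thus "X = 0" by (simp add: vec_eq_iff)
qed

lemma psd_herm: "psd_mat P \<Longrightarrow> cadj P = P"
  by (simp add: psd_mat_def hermitian_mat_def)

lemma psd_sqrt_unique:
  fixes P R :: "complex^'n^'n"
  assumes P: "psd_mat P" and R: "psd_mat R" and eq: "P ** P = R ** R"
  shows "P = R"
proof -
  define D where "D = P - R"
  have hD: "cadj D = D" using psd_herm[OF P] psd_herm[OF R] by (simp add: D_def)
  have PD: "P ** D = - (D ** R)"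
    using eq by (simp add: D_def mm_diff_left mm_diff_right matrix_mul_assoc)
  have tr1: "trace (D ** P ** D) = - trace (D ** R ** D)"
  proof -
    have "trace (D ** P ** D) = trace (D ** (P ** D))" by (simp add: matrix_mul_assoc)
    also have "\<dots> = - trace (D ** (D ** R))" by (simp add: PD mm_neg_right trace_neg)
    also have "trace (D ** (D ** R)) = trace ((D ** R) ** D)" by (rule trace_mul_sym)
    finally show ?thesis by (simp add: matrix_mul_assoc)
  qed
  have key: "Re (trace (D ** Q ** D)) \<ge> 0 \<and> (Re (trace (D ** Q ** D)) = 0 \<longrightarrow> Q ** D = 0)"
    if Q: "psd_mat Q" for Q
  proof -
    obtain S where S: "psd_mat S" "S ** S = Q" using psd_sqrt_exists[OF Q] by blast
    have "D ** Q ** D = cadj (S ** D) ** (S ** D)"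
      using psd_herm[OF S(1)] hD by (simp add: cadj_mult matrix_mul_assoc S(2)[symmetric])
    hence e: "trace (D ** Q ** D) = trace (cadj (S ** D) ** (S ** D))" by simp
    show ?thesis
    proof
      show "Re (trace (D ** Q ** D)) \<ge> 0" unfolding e by (rule frob_nonneg)
      show "Re (trace (D ** Q ** D)) = 0 \<longrightarrow> Q ** D = 0"
      proof
        assume "Re (trace (D ** Q ** D)) = 0"
        hence "S ** D = 0" unfolding e by (rule frob_zero)
        hence "S ** (S ** D) = 0" by simp
        thus "Q ** D = 0" using S(2) by (simp add: matrix_mul_assoc)
      qed
    qed
  qed
  note kP = key[OF P] and kR = key[OF R]
  have "Re (trace (D ** P ** D)) = - Re (trace (D ** R ** D))" using tr1 by simp
  hence z: "Re (trace (D ** P ** D)) = 0" "Re (trace (D ** R ** D)) = 0" using kP kR by linarith+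
  have "P ** D = 0" "R ** D = 0" using z kP kR by auto
  hence "D ** D = 0" by (simp add: D_def mm_diff_right)
  hence "Re (trace (cadj D ** D)) = 0" using hD by (simp add: trace_def)
  hence "D = 0" by (rule frob_zero)
  thus ?thesis by (simp add: D_def)
qed

lemma psd_gram: "psd_mat (cadj A ** (A::complex^'n^'n))"
  unfolding psd_iff
proof
  show "hermitian_mat (cadj A ** A)" by (simp add: hermitian_mat_def cadj_mult)
  show "\<forall>x. 0 \<le> Re (cinner x ((cadj A ** A) *v x))"
  proof
    fix x
    have "cinner x ((cadj A ** A) *v x) = cinner (A *v x) (A *v x)"
      by (simp add: cinner_matrix matrix_vector_mul_assoc[symmetric])
    thus "0 \<le> Re (cinner x ((cadj A ** A) *v x))" by (simp add: cinner_self)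
  qed
qed

lemma mabs_props: "psd_mat (mabs A) \<and> mabs A ** mabs A = cadj A ** A"
proof -
  have "\<exists>!P. psd_mat P \<and> P ** P = cadj A ** A"
    using psd_sqrt_exists[OF psd_gram[of A]] psd_sqrt_unique by metis
  thus ?thesis unfolding mabs_def by (rule theI')
qed



lemma term_bound:
  fixes g w d e :: real
  assumes g: "g \<ge> 0" and w: "w \<ge> 0" and d: "d \<ge> 0" and e: "e \<ge> 0"
    and z: "d = 0 \<or> e = 0 \<longrightarrow> g = 0"
  shows "g * w \<le> ((1 + sqrt 2) / 2) * (d * e * w\<^sup>2)
     + ((sqrt 2 - 1) / 4) * (g\<^sup>2 * inverse (e * e) + g\<^sup>2 * inverse (d * d))"
proof (cases "g = 0")
  case True
  have "0 \<le> ((1 + sqrt 2) / 2) * (d * e * w\<^sup>2)" using d e by simp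
  moreover have "0 \<le> ((sqrt 2 - 1) / 4) * (g\<^sup>2 * inverse (e * e) + g\<^sup>2 * inverse (d * d))"
    using True by simp
  ultimately show ?thesis using True by simp
next
  case False
  hence dp: "d > 0" and ep: "e > 0" using z d e by auto
  define b where "b = (1 + sqrt 2) / 2"
  define a where "a = (sqrt 2 - 1) / 4"
  have bp: "b > 0" by (simp add: b_def add_pos_nonneg)
  have ab: "4 * b * (2 * a) = 1"
    by (simp add: a_def b_def algebra_simps power2_eq_square[symmetric])
  have s1: "4 * b * d * e * (g * w) \<le> 4 * b * d * e * (b * (d * e * w\<^sup>2)) + g\<^sup>2"
  proof -
    have "0 \<le> (2 * b * d * e * w - g)\<^sup>2" by simp
    thus ?thesis by (simp add: power2_eq_square algebra_simps)
  qed
  have de: "4 * b * d * e > 0" using bp dp ep by simp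
  have s1': "g * w \<le> b * (d * e * w\<^sup>2) + g\<^sup>2 / (4 * b * d * e)"
  proof -
    have "g * w \<le> (4 * b * d * e * (b * (d * e * w\<^sup>2)) + g\<^sup>2) / (4 * b * d * e)"
      by (subst pos_le_divide_eq[OF de]) (metis mult.commute s1)
    also have "\<dots> = b * (d * e * w\<^sup>2) + g\<^sup>2 / (4 * b * d * e)"
      using de by (simp add: add_divide_distrib)
    finally show ?thesis .
  qed
  have s2: "g\<^sup>2 / (4 * b * d * e) \<le> a * (g\<^sup>2 * inverse (e * e) + g\<^sup>2 * inverse (d * d))"
  proof -
    have "2 * (inverse d * inverse e) \<le> inverse e * inverse e + inverse d * inverse d"
    proof -
      have "0 \<le> (inverse d - inverse e)\<^sup>2" by simp
      thus ?thesis by (simp add: power2_eq_square algebra_simps)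
    qed
    hence "g\<^sup>2 * (2 * (inverse d * inverse e)) \<le> g\<^sup>2 * (inverse e * inverse e + inverse d * inverse d)"
      by (simp add: mult_left_mono)
    hence "a * (g\<^sup>2 * (2 * (inverse d * inverse e))) \<le> a * (g\<^sup>2 * (inverse e * inverse e + inverse d * inverse d))"
      by (rule mult_left_mono) (simp add: a_def)
    moreover have "g\<^sup>2 / (4 * b * d * e) = a * (g\<^sup>2 * (2 * (inverse d * inverse e)))"
    proof -
      have "1 / (4 * b) = 2 * a" using ab bp by (simp add: field_simps)
      moreover have "g\<^sup>2 / (4 * b * d * e) = g\<^sup>2 * (1 / (4 * b)) * (inverse d * inverse e)"
        using dp ep bp by (simp add: field_simps)
      ultimately have "g\<^sup>2 / (4 * b * d * e) = g\<^sup>2 * (2 * a) * (inverse d * inverse e)"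
        by simp
      thus ?thesis by (simp only: mult_ac)
    qed
    moreover have "a * (g\<^sup>2 * (inverse e * inverse e + inverse d * inverse d)) =
        a * (g\<^sup>2 * inverse (e * e) + g\<^sup>2 * inverse (d * d))"
      by (simp only: inverse_mult_distrib distrib_left)
    ultimately show ?thesis by linarith
  qed
  show ?thesis using s1' s2 unfolding a_def[symmetric] b_def[symmetric] by linarith
qed



lemma diagr_mult_left: "(diagr d ** A) $ i $ j = of_real (d i) * A $ i $ j"
proof -
  have "(diagr d ** A) $ i $ j = (\<Sum>k\<in>UNIV. if k = i then of_real (d i) * A $ k $ j else 0)"
    unfolding diagr_def matrix_matrix_mult_def vec_lambda_beta by (intro sum.cong) auto
  also have "\<dots> = of_real (d i) * A $ i $ j"
    by (rule trans[OF sum.delta[OF finite]]) simp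
  finally show ?thesis .
qed

lemma diagr_nth: "diagr d $ i $ j = (if i = j then of_real (d i) else 0)"
  by (simp add: diagr_def)

lemma gram_diag_entry: "(cadj Z ** Z) $ i $ i = of_real (\<Sum>k\<in>UNIV. (cmod (Z $ k $ i))\<^sup>2)"
  by (simp add: matrix_matrix_mult_def of_real_sum complex_norm_square mult.commute del: of_real_power)

lemma colzero:
  assumes "cadj X ** X = diagr dd" "dd i = 0"
  shows "X $ k $ i = 0"
proof -
  have "of_real (\<Sum>k\<in>UNIV. (cmod (X $ k $ i))\<^sup>2) = (0::complex)"
    using assms gram_diag_entry[of X i] by (simp add: diagr_nth)
  hence "(\<Sum>k\<in>UNIV. (cmod (X $ k $ i))\<^sup>2) = 0" using of_real_eq_0_iff by blast
  hence "\<forall>k\<in>UNIV. (cmod (X $ k $ i))\<^sup>2 = 0" by (simp add: sum_nonneg_eq_0_iff)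
  thus ?thesis by simp
qed

lemma bessel:
  fixes X Y :: "complex^'n^'n"
  assumes X: "cadj X ** X = diagr dd" and Y: "cadj Y ** Y = diagr ee"
  shows "(\<Sum>j\<in>UNIV. (cmod ((cadj X ** Y) $ i $ j))\<^sup>2 * inverse (ee j)) \<le> dd i"
proof -
  define F where "F = diagr (\<lambda>j. inverse (ee j))"
  define K where "K = Y ** F ** cadj Y"
  define N where "N = mat 1 - K"
  define G where "G = cadj X ** Y"
  have inv3: "inverse x * x * inverse x = inverse x" for x :: real
    by (cases "x = 0") simp_all
  have FF: "F ** diagr ee ** F = F"
    by (simp add: F_def diagr_mult inv3)
  have hK: "cadj K = K" by (simp add: K_def F_def cadj_mult matrix_mul_assoc)
  have KK: "K ** K = K"
  proof -
    have "K ** K = Y ** (F ** (cadj Y ** Y) ** F) ** cadj Y" by (simp add: K_def matrix_mul_assoc)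
    also have "\<dots> = K" using FF Y by (simp add: K_def)
    finally show ?thesis .
  qed
  have NN: "cadj N ** N = N"
  proof -
    have "cadj N ** N = (mat 1 - K) ** (mat 1 - K)" by (simp add: N_def hK)
    also have "\<dots> = mat 1 - K - K + K ** K" by (simp add: mm_diff_left mm_diff_right)
    also have "\<dots> = N" using KK by (simp add: N_def)
    finally show ?thesis .
  qed
  have "cadj (N ** X) ** (N ** X) = cadj X ** (cadj N ** N) ** X"
    by (simp add: cadj_mult matrix_mul_assoc)
  hence "cadj X ** N ** X = cadj (N ** X) ** (N ** X)" by (simp only: NN)
  hence "Re ((cadj X ** N ** X) $ i $ i) \<ge> 0" by (simp add: gram_diag_entry sum_nonneg)
  moreover have "cadj X ** N ** X = cadj X ** X - G ** F ** cadj G"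
    by (simp add: N_def K_def G_def mm_diff_left mm_diff_right cadj_mult matrix_mul_assoc)
  ultimately have A: "Re ((G ** F ** cadj G) $ i $ i) \<le> Re ((cadj X ** X) $ i $ i)" by simp
  have B: "(G ** F ** cadj G) $ i $ i = of_real (\<Sum>j\<in>UNIV. (cmod (G $ i $ j))\<^sup>2 * inverse (ee j))"
  proof -
    have "(G ** F ** cadj G) $ i $ i = (\<Sum>j\<in>UNIV. (G ** F) $ i $ j * cadj G $ j $ i)"
      by (simp only: matrix_matrix_mult_def[of "G ** F" "cadj G"] vec_lambda_beta)
    also have "\<dots> = (\<Sum>j\<in>UNIV. of_real (inverse (ee j)) * (G $ i $ j * cnj (G $ i $ j)))"
      by (simp add: F_def mult_diagr mult_ac)
    also have "\<dots> = (\<Sum>j\<in>UNIV. of_real ((cmod (G $ i $ j))\<^sup>2 * inverse (ee j)))"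
      by (simp only: complex_norm_square[symmetric] of_real_mult mult.commute)
    finally show ?thesis by (simp add: of_real_sum)
  qed
  have C: "(cadj X ** X) $ i $ i = of_real (dd i)" using X by (simp add: diagr_nth)
  from A have "(\<Sum>j\<in>UNIV. (cmod (G $ i $ j))\<^sup>2 * inverse (ee j)) \<le> dd i"
    unfolding B C by (simp only: Re_complex_of_real)
  thus ?thesis by (simp only: G_def)
qed



lemma core:
  fixes X Y W :: "complex^'n^'n" and d e :: "'n \<Rightarrow> real"
  assumes d: "\<forall>i. 0 \<le> d i" and e: "\<forall>j. 0 \<le> e j"
    and X: "cadj X ** X = diagr (\<lambda>i. d i * d i)" and Y: "cadj Y ** Y = diagr (\<lambda>j. e j * e j)"
  shows "Re (trace (cadj X ** Y ** W)) \<le> ((sqrt 2 - 1) / 4) * ((\<Sum>i\<in>UNIV. d i * d i) + (\<Sum>j\<in>UNIV. e j * e j))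
     + ((1 + sqrt 2) / 2) * Re (trace (diagr d ** cadj W ** diagr e ** W))"
proof -
  define G where "G = cadj X ** Y"
  define a :: real where "a = (sqrt 2 - 1) / 4"
  define b :: real where "b = (1 + sqrt 2) / 2"
  have a0: "a \<ge> 0" by (simp add: a_def)
  have tr1: "Re (trace (G ** W)) = (\<Sum>i\<in>UNIV. \<Sum>j\<in>UNIV. Re (G $ i $ j * W $ j $ i))"
    by (simp add: trace_def matrix_matrix_mult_def Re_sum)
  have tr2: "Re (trace (diagr d ** cadj W ** diagr e ** W)) =
      (\<Sum>i\<in>UNIV. \<Sum>j\<in>UNIV. d i * e j * (cmod (W $ j $ i))\<^sup>2)"
  proof -
    have ent: "(diagr d ** cadj W ** diagr e ** W) $ i $ i =
        of_real (\<Sum>j\<in>UNIV. d i * e j * (cmod (W $ j $ i))\<^sup>2)" for i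
    proof -
      have "(diagr d ** cadj W ** diagr e ** W) $ i $ i = (\<Sum>j\<in>UNIV. (diagr d ** cadj W ** diagr e) $ i $ j * W $ j $ i)"
        by (simp only: matrix_matrix_mult_def[of "diagr d ** cadj W ** diagr e" W] vec_lambda_beta)
      also have "\<dots> = (\<Sum>j\<in>UNIV. of_real (d i * e j) * (W $ j $ i * cnj (W $ j $ i)))"
        by (simp add: mult_diagr diagr_mult_left mult_ac)
      also have "\<dots> = of_real (\<Sum>j\<in>UNIV. d i * e j * (cmod (W $ j $ i))\<^sup>2)"
        by (simp only: complex_norm_square[symmetric] of_real_mult of_real_sum)
      finally show ?thesis .
    qed
    show ?thesis by (simp only: trace_def ent Re_sum Re_complex_of_real)
  qed
  have zero: "G $ i $ j = 0" if "d i = 0 \<or> e j = 0" for i j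
  proof -
    have "\<forall>k. cnj (X $ k $ i) * Y $ k $ j = 0"
      using that colzero[OF X, of i] colzero[OF Y, of j] by auto
    hence "(\<Sum>k\<in>UNIV. cnj (X $ k $ i) * Y $ k $ j) = 0"
      using sum.neutral[of UNIV "\<lambda>k. cnj (X $ k $ i) * Y $ k $ j"] by blast
    thus ?thesis by (simp add: G_def matrix_matrix_mult_def)
  qed
  have cG: "cmod ((cadj Y ** X) $ j $ i) = cmod (G $ i $ j)" for i j
  proof -
    have "cadj Y ** X = cadj G" by (simp add: G_def cadj_mult)
    thus ?thesis by simp
  qed
  have tb: "Re (G $ i $ j * W $ j $ i) \<le> b * (d i * e j * (cmod (W $ j $ i))\<^sup>2)
      + a * ((cmod (G $ i $ j))\<^sup>2 * inverse (e j * e j) + (cmod (G $ i $ j))\<^sup>2 * inverse (d i * d i))"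
    for i j
  proof -
    have "Re (G $ i $ j * W $ j $ i) \<le> cmod (G $ i $ j * W $ j $ i)" by (rule complex_Re_le_cmod)
    also have "\<dots> = cmod (G $ i $ j) * cmod (W $ j $ i)" by (simp add: norm_mult)
    also have "\<dots> \<le> b * (d i * e j * (cmod (W $ j $ i))\<^sup>2)
      + a * ((cmod (G $ i $ j))\<^sup>2 * inverse (e j * e j) + (cmod (G $ i $ j))\<^sup>2 * inverse (d i * d i))"
      unfolding a_def b_def by (rule term_bound) (use d e zero in auto)
    finally show ?thesis .
  qed
  have "Re (trace (G ** W)) \<le> (\<Sum>i\<in>UNIV. \<Sum>j\<in>UNIV. b * (d i * e j * (cmod (W $ j $ i))\<^sup>2)
      + a * ((cmod (G $ i $ j))\<^sup>2 * inverse (e j * e j) + (cmod (G $ i $ j))\<^sup>2 * inverse (d i * d i)))"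
    unfolding tr1 by (intro sum_mono tb)
  also have "\<dots> = b * (\<Sum>i\<in>UNIV. \<Sum>j\<in>UNIV. d i * e j * (cmod (W $ j $ i))\<^sup>2)
      + a * ((\<Sum>i\<in>UNIV. \<Sum>j\<in>UNIV. (cmod (G $ i $ j))\<^sup>2 * inverse (e j * e j))
           + (\<Sum>j\<in>UNIV. \<Sum>i\<in>UNIV. (cmod ((cadj Y ** X) $ j $ i))\<^sup>2 * inverse (d i * d i)))"
  proof -
    have e2: "(\<Sum>j\<in>UNIV. \<Sum>i\<in>UNIV. (cmod ((cadj Y ** X) $ j $ i))\<^sup>2 * inverse (d i * d i))
        = (\<Sum>i\<in>UNIV. \<Sum>j\<in>UNIV. (cmod (G $ i $ j))\<^sup>2 * inverse (d i * d i))"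
      unfolding cG by (rule sum.swap)
    show ?thesis unfolding e2
      by (simp only: sum.distrib sum_distrib_left distrib_left)
  qed
  also have "\<dots> \<le> b * (\<Sum>i\<in>UNIV. \<Sum>j\<in>UNIV. d i * e j * (cmod (W $ j $ i))\<^sup>2)
      + a * ((\<Sum>i\<in>UNIV. d i * d i) + (\<Sum>j\<in>UNIV. e j * e j))"
  proof -
    have "(\<Sum>i\<in>UNIV. \<Sum>j\<in>UNIV. (cmod (G $ i $ j))\<^sup>2 * inverse (e j * e j)) \<le> (\<Sum>i\<in>UNIV. d i * d i)"
      unfolding G_def by (intro sum_mono bessel[OF X Y])
    moreover have "(\<Sum>j\<in>UNIV. \<Sum>i\<in>UNIV. (cmod ((cadj Y ** X) $ j $ i))\<^sup>2 * inverse (d i * d i)) \<le> (\<Sum>j\<in>UNIV. e j * e j)"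
      by (intro sum_mono bessel[OF Y X])
    ultimately show ?thesis using a0 by (simp add: mult_left_mono add_mono)
  qed
  finally show ?thesis unfolding G_def tr2 a_def b_def by (simp add: add.commute)
qed



lemma trace_conj_unitary:
  assumes "cadj U ** U = mat 1"
  shows "trace (cadj U ** M ** U) = trace (M :: complex^'n^'n)"
proof -
  have "trace (cadj U ** M ** U) = trace (U ** (cadj U ** M))" by (rule trace_mul_sym)
  also have "\<dots> = trace M" using unitary_right[OF assms] by (simp add: matrix_mul_assoc)
  finally show ?thesis .
qed

lemma trace_diagr: "trace (diagr f) = of_real (\<Sum>i\<in>UNIV. f i)"
  by (simp add: trace_def diagr_def of_real_sum)

lemma spectral_data:
  fixes A :: "complex^'n^'n"
  obtains U d where "cadj U ** U = mat 1" "\<forall>i. 0 \<le> d i"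
    "mabs A = U ** diagr d ** cadj U"
    "cadj (A ** U) ** (A ** U) = diagr (\<lambda>i. d i * d i)"
proof -
  have P: "psd_mat (mabs A)" and PP: "mabs A ** mabs A = cadj A ** A" using mabs_props by blast+
  obtain U d where Ud: "cadj U ** U = mat 1" "U ** cadj U = mat 1" "\<forall>i. 0 \<le> d i"
    "mabs A = U ** diagr d ** cadj U"
    using psd_spectral[OF P] by blast
  have "cadj (A ** U) ** (A ** U) = cadj U ** (cadj A ** A) ** U"
    by (simp add: cadj_mult matrix_mul_assoc)
  also have "\<dots> = cadj U ** (mabs A ** mabs A) ** U" by (simp add: PP)
  also have "\<dots> = (cadj U ** U) ** diagr d ** (cadj U ** U) ** diagr d ** (cadj U ** U)"
    by (simp add: Ud(4) matrix_mul_assoc)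
  also have "\<dots> = diagr (\<lambda>i. d i * d i)" by (simp add: Ud(1) diagr_mult)
  finally show ?thesis using that Ud by blast
qed

theorem mainTheorem1:
  fixes A B :: "complex^'n^'n"
  shows "frob_norm (A + B) \<le> sqrt ((1 + sqrt 2) / 2) * frob_norm (mabs A + mabs B)"
proof -
  define P where "P = mabs A"
  define Q where "Q = mabs B"
  obtain U d where U: "cadj U ** U = mat 1" and d: "\<forall>i. 0 \<le> d i"
    and PU: "P = U ** diagr d ** cadj U" and XX: "cadj (A ** U) ** (A ** U) = diagr (\<lambda>i. d i * d i)"
    using spectral_data[of A] unfolding P_def by blast
  obtain V e where V: "cadj V ** V = mat 1" and e: "\<forall>i. 0 \<le> e i"
    and QV: "Q = V ** diagr e ** cadj V" and YY: "cadj (B ** V) ** (B ** V) = diagr (\<lambda>i. e i * e i)"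
    using spectral_data[of B] unfolding Q_def by blast
  have hP: "cadj P = P" using mabs_props psd_herm unfolding P_def by blast
  have hQ: "cadj Q = Q" using mabs_props psd_herm unfolding Q_def by blast
  have AA: "cadj A ** A = P ** P" using mabs_props unfolding P_def by metis
  have BB: "cadj B ** B = Q ** Q" using mabs_props unfolding Q_def by metis
  define W where "W = cadj V ** U"
  have core': "Re (trace (cadj (A ** U) ** (B ** V) ** W)) \<le> ((sqrt 2 - 1) / 4) * ((\<Sum>i\<in>UNIV. d i * d i) + (\<Sum>j\<in>UNIV. e j * e j))
     + ((1 + sqrt 2) / 2) * Re (trace (diagr d ** cadj W ** diagr e ** W))"
    by (rule core[OF d e XX YY])
  have t1: "trace (cadj (A ** U) ** (B ** V) ** W) = trace (cadj A ** B)"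
  proof -
    have "cadj (A ** U) ** (B ** V) ** W = cadj U ** (cadj A ** B) ** (V ** cadj V) ** U"
      by (simp add: W_def cadj_mult matrix_mul_assoc)
    also have "\<dots> = cadj U ** (cadj A ** B) ** U" using unitary_right[OF V] by simp
    finally show ?thesis using trace_conj_unitary[OF U] by simp
  qed
  have t2: "trace (diagr d ** cadj W ** diagr e ** W) = trace (P ** Q)"
  proof -
    have "diagr d ** cadj W ** diagr e ** W = diagr d ** cadj U ** Q ** U"
      by (simp add: W_def QV cadj_mult matrix_mul_assoc)
    hence "trace (diagr d ** cadj W ** diagr e ** W) = trace (U ** (diagr d ** cadj U ** Q))"
      using trace_mul_sym[of "diagr d ** cadj U ** Q" U] by (simp add: matrix_mul_assoc)
    thus ?thesis by (simp add: PU matrix_mul_assoc)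
  qed
  have t3: "Re (trace (P ** P)) = (\<Sum>i\<in>UNIV. d i * d i)"
  proof -
    have "P ** P = U ** (diagr d ** (cadj U ** U) ** diagr d) ** cadj U" by (simp add: PU matrix_mul_assoc)
    also have "\<dots> = U ** diagr (\<lambda>i. d i * d i) ** cadj U" by (simp add: U diagr_mult)
    finally have "trace (P ** P) = trace (cadj (cadj U) ** diagr (\<lambda>i. d i * d i) ** cadj U)" by simp
    also have "\<dots> = trace (diagr (\<lambda>i. d i * d i))"
      by (rule trace_conj_unitary) (simp add: unitary_right[OF U])
    finally show ?thesis by (simp add: trace_diagr)
  qed
  have t4: "Re (trace (Q ** Q)) = (\<Sum>i\<in>UNIV. e i * e i)"
  proof -
    have "Q ** Q = V ** (diagr e ** (cadj V ** V) ** diagr e) ** cadj V" by (simp add: QV matrix_mul_assoc)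
    also have "\<dots> = V ** diagr (\<lambda>i. e i * e i) ** cadj V" by (simp add: V diagr_mult)
    finally have "trace (Q ** Q) = trace (cadj (cadj V) ** diagr (\<lambda>i. e i * e i) ** cadj V)" by simp
    also have "\<dots> = trace (diagr (\<lambda>i. e i * e i))"
      by (rule trace_conj_unitary) (simp add: unitary_right[OF V])
    finally show ?thesis by (simp add: trace_diagr)
  qed
  define SA where "SA = Re (trace (P ** P))"
  define SB where "SB = Re (trace (Q ** Q))"
  define R where "R = Re (trace (cadj A ** B))"
  define T where "T = Re (trace (P ** Q))"
  have key: "R \<le> ((sqrt 2 - 1) / 4) * (SA + SB) + ((1 + sqrt 2) / 2) * T"
    using core' unfolding t1 t2 R_def T_def SA_def SB_def t3 t4 .
  have L: "Re (trace (cadj (A + B) ** (A + B))) = SA + SB + 2 * R"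
  proof -
    have "cadj (A + B) ** (A + B) = cadj A ** A + cadj A ** B + (cadj B ** A + cadj B ** B)"
      by (simp add: matrix_add_ldistrib mm_add_right)
    moreover have "trace (cadj B ** A) = cnj (trace (cadj A ** B))"
      by (metis cadj_cadj cadj_mult trace_cadj)
    ultimately show ?thesis
      by (simp add: trace_add AA BB SA_def SB_def R_def)
  qed
  have M: "Re (trace (cadj (P + Q) ** (P + Q))) = SA + SB + 2 * T"
  proof -
    have "cadj (P + Q) ** (P + Q) = P ** P + P ** Q + (Q ** P + Q ** Q)"
      by (simp add: hP hQ matrix_add_ldistrib mm_add_right)
    moreover have "trace (Q ** P) = trace (P ** Q)" by (rule trace_mul_sym)
    ultimately show ?thesis by (simp add: trace_add SA_def SB_def T_def)
  qed
  define c :: real where "c = (1 + sqrt 2) / 2"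
  have c2: "1 + 2 * ((sqrt 2 - 1) / 4) = c" by (simp add: c_def field_simps)
  have "SA + SB + 2 * R \<le> SA + SB + 2 * (((sqrt 2 - 1) / 4) * (SA + SB) + c * T)"
    using key unfolding c_def by (intro add_left_mono mult_left_mono) auto
  also have "\<dots> = (1 + 2 * ((sqrt 2 - 1) / 4)) * (SA + SB) + 2 * c * T" by (simp add: algebra_simps)
  also have "\<dots> = c * (SA + SB + 2 * T)" unfolding c2 by (simp add: algebra_simps)
  finally have ineq: "SA + SB + 2 * R \<le> c * (SA + SB + 2 * T)" .
  have "frob_norm (A + B) = sqrt (SA + SB + 2 * R)" by (simp only: frob_norm_def L)
  also have "\<dots> \<le> sqrt (c * (SA + SB + 2 * T))" using ineq by simp
  also have "\<dots> = sqrt c * frob_norm (P + Q)" by (simp only: frob_norm_def M real_sqrt_mult)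
  finally show ?thesis unfolding c_def P_def Q_def .
qed

end
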